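(* Let $\mathrm{M}$ be a simple matroid on a finite set $E$, let $\mathcal{G}$ be a building set of its lattice of flats, and let $e\in E$. Then the set \[ \mathcal{G}\setminus e=\{S\in\mathcal{L}(\mathrm{M}\setminus e):\operatorname{cl}_{\mathrm{M}}(S)\in\mathcal{G}\} \] is a building set of the lattice of flats $\mathcal{L}(\mathrm{M}\setminus e)$ of the deletion $\mathrm{M}\setminus e$.
   Context: Flats are ordered by inclusion, $\hat0=\varnothing$, join $F\vee G=\operatorname{cl}(F\cup G)$. A building set of a geometric lattice $\mathcal{L}$ is $\mathcal{G}\subseteq\mathcal{L}\setminus\{\hat0\}$ such that for every $F\neq\hat0$, with $\max\mathcal{G}_{\leqslant F}$ the set of maximal elements of $\{G\in\mathcal{G}:G\leqslant F\}$, the join map $\prod_{G\in\max\mathcal{G}_{\leqslant F}}[\hat0,G]\to[\hat0,F]$ is a poset isomorphism. *)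

theory Defs
  imports Main "HOL-Library.FuncSet"
begin

definition matroid :: "'a set \<Rightarrow> 'a set set \<Rightarrow> bool" where
  "matroid E Ind \<longleftrightarrow> finite E \<and> Ind \<subseteq> Pow E \<and> {} \<in> Ind
     \<and> (\<forall>I J. J \<in> Ind \<longrightarrow> I \<subseteq> J \<longrightarrow> I \<in> Ind)
     \<and> (\<forall>I J. I \<in> Ind \<longrightarrow> J \<in> Ind \<longrightarrow> card I < card J \<longrightarrow>
           (\<exists>x \<in> J - I. insert x I \<in> Ind))"

definition rk :: "'a set set \<Rightarrow> 'a set \<Rightarrow> nat" where
  "rk Ind S = Max (card ` {I. I \<subseteq> S \<and> I \<in> Ind})"

definition cl :: "'a set \<Rightarrow> 'a set set \<Rightarrow> 'a set \<Rightarrow> 'a set" where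
  "cl E Ind S = {x \<in> E. rk Ind (insert x S) = rk Ind S}"

definition flat :: "'a set \<Rightarrow> 'a set set \<Rightarrow> 'a set \<Rightarrow> bool" where
  "flat E Ind F \<longleftrightarrow> F \<subseteq> E \<and> cl E Ind F = F"

definition flats :: "'a set \<Rightarrow> 'a set set \<Rightarrow> 'a set set" where
  "flats E Ind = {F. flat E Ind F}"

text \<open>Simple: no loops and no parallel elements.\<close>
definition simple :: "'a set \<Rightarrow> 'a set set \<Rightarrow> bool" where
  "simple E Ind \<longleftrightarrow> (\<forall>x \<in> E. \<forall>y \<in> E. {x, y} \<in> Ind)"

text \<open>Deletion of e: ground set E - {e}, independent sets those avoiding e.\<close>
definition del_ind :: "'a set set \<Rightarrow> 'a \<Rightarrow> 'a set set" where
  "del_ind Ind e = {I \<in> Ind. e \<notin> I}"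

definition join_fam :: "'a set \<Rightarrow> 'a set set \<Rightarrow> 'a set set \<Rightarrow> ('a set \<Rightarrow> 'a set) \<Rightarrow> 'a set" where
  "join_fam E Ind A x = cl E Ind (\<Union>G \<in> A. x G)"

definition maxG :: "'a set set \<Rightarrow> 'a set \<Rightarrow> 'a set set" where
  "maxG \<G> F = {G \<in> \<G>. G \<subseteq> F \<and> \<not> (\<exists>H \<in> \<G>. H \<subseteq> F \<and> G \<subset> H)}"

definition interval :: "'a set \<Rightarrow> 'a set set \<Rightarrow> 'a set \<Rightarrow> 'a set set" where
  "interval E Ind F = {X \<in> flats E Ind. cl E Ind {} \<subseteq> X \<and> X \<subseteq> F}"

text \<open>Building set: for each F \<noteq> bottom, the join map from the product poset
  of intervals [bottom, G] (G maximal in \<G> below F, componentwise order)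
  onto [bottom, F] is a poset isomorphism.\<close>
definition building_set :: "'a set \<Rightarrow> 'a set set \<Rightarrow> 'a set set \<Rightarrow> bool" where
  "building_set E Ind \<G> \<longleftrightarrow>
     \<G> \<subseteq> flats E Ind - {cl E Ind {}} \<and>
     (\<forall>F \<in> flats E Ind. F \<noteq> cl E Ind {} \<longrightarrow>
        (let A = maxG \<G> F; P = (\<Pi>\<^sub>E G \<in> A. interval E Ind G) in
          bij_betw (join_fam E Ind A) P (interval E Ind F) \<and>
          (\<forall>x \<in> P. \<forall>y \<in> P. (\<forall>G \<in> A. x G \<subseteq> y G) \<longleftrightarrow>
               join_fam E Ind A x \<subseteq> join_fam E Ind A y)))"

end

theory Submission
  imports Defs "HOL-Library.FuncSet"
begin

definition Dsum :: "'a set \<Rightarrow> 'a set set \<Rightarrow> 'a set set \<Rightarrow> 'a set \<Rightarrow> bool" where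
  "Dsum E Ind A F \<longleftrightarrow> A \<subseteq> flats E Ind \<and> (\<forall>G\<in>A. \<forall>H\<in>A. G \<noteq> H \<longrightarrow> G \<inter> H = {}) \<and> \<Union>A = F
     \<and> (\<forall>X. X \<subseteq> F \<longrightarrow> cl E Ind X = (\<Union>G\<in>A. cl E Ind (X \<inter> G)))"

definition isoP :: "'a set \<Rightarrow> 'a set set \<Rightarrow> 'a set set \<Rightarrow> 'a set \<Rightarrow> bool" where
  "isoP E Ind A F \<longleftrightarrow> bij_betw (join_fam E Ind A) (\<Pi>\<^sub>E G \<in> A. interval E Ind G) (interval E Ind F) \<and>
          (\<forall>x \<in> (\<Pi>\<^sub>E G \<in> A. interval E Ind G). \<forall>y \<in> (\<Pi>\<^sub>E G \<in> A. interval E Ind G). (\<forall>G \<in> A. x G \<subseteq> y G) \<longleftrightarrow>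
               join_fam E Ind A x \<subseteq> join_fam E Ind A y)"

lemma bs_iff: "building_set E Ind \<G> \<longleftrightarrow> \<G> \<subseteq> flats E Ind - {cl E Ind {}} \<and>
   (\<forall>F \<in> flats E Ind. F \<noteq> cl E Ind {} \<longrightarrow> isoP E Ind (maxG \<G> F) F)"
  by (simp add: building_set_def isoP_def Let_def)

lemma join_restrict: "join_fam E Ind A (restrict f A) = cl E Ind (\<Union>G\<in>A. f G)"
  by (simp add: join_fam_def)

locale smat =
  fixes E :: "'a set" and Ind :: "'a set set"
  assumes mat: "matroid E Ind" and simp: "simple E Ind"
begin

lemma finE: "finite E" using mat by (simp add: matroid_def)
lemma ind_sub: "I \<in> Ind \<Longrightarrow> I \<subseteq> E" using mat by (auto simp: matroid_def)
lemma ind_fin: "I \<in> Ind \<Longrightarrow> finite I" using ind_sub finE finite_subset by blast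
lemma ind_empty: "{} \<in> Ind" using mat by (simp add: matroid_def)
lemma ind_down: "J \<in> Ind \<Longrightarrow> I \<subseteq> J \<Longrightarrow> I \<in> Ind" using mat by (simp add: matroid_def)
lemma aug: "I \<in> Ind \<Longrightarrow> J \<in> Ind \<Longrightarrow> card I < card J \<Longrightarrow> \<exists>x\<in>J - I. insert x I \<in> Ind"
  using mat by (simp add: matroid_def)

lemma fin_set: "finite {I. I \<subseteq> S \<and> I \<in> Ind}"
proof -
  have "{I. I \<subseteq> S \<and> I \<in> Ind} \<subseteq> Pow E" using ind_sub by auto
  thus ?thesis using finE by (meson finite_Pow_iff finite_subset)
qed

lemma rk_ge: "I \<in> Ind \<Longrightarrow> I \<subseteq> S \<Longrightarrow> card I \<le> rk Ind S"
  unfolding rk_def using fin_set by (intro Max_ge) auto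

lemma rk_obtain: "\<exists>I. I \<subseteq> S \<and> I \<in> Ind \<and> card I = rk Ind S"
proof -
  have "rk Ind S \<in> card ` {I. I \<subseteq> S \<and> I \<in> Ind}"
    unfolding rk_def using fin_set ind_empty by (intro Max_in) auto
  thus ?thesis by auto
qed

lemma rk_mono: "S \<subseteq> T \<Longrightarrow> rk Ind S \<le> rk Ind T"
  using rk_obtain[of S] rk_ge by (metis order_trans)

lemma rk_le_card: "finite S \<Longrightarrow> rk Ind S \<le> card S"
  using rk_obtain[of S] by (metis card_mono)

lemma extend: "I \<in> Ind \<Longrightarrow> I \<subseteq> T \<Longrightarrow> \<exists>J. I \<subseteq> J \<and> J \<subseteq> T \<and> J \<in> Ind \<and> card J = rk Ind T"
proof (induction "rk Ind T - card I" arbitrary: I rule: less_induct)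
  case less
  show ?case
  proof (cases "card I = rk Ind T")
    case True
    have "I \<subseteq> I \<and> I \<subseteq> T \<and> I \<in> Ind \<and> card I = rk Ind T" using True less.prems by simp
    then show ?thesis by blast
  next
    case False
    with rk_ge[OF less.prems] have lt: "card I < rk Ind T" by simp
    obtain J0 where J0: "J0 \<subseteq> T" "J0 \<in> Ind" "card J0 = rk Ind T" using rk_obtain by blast
    have "card I < card J0" using lt J0 by simp
    then obtain x where x: "x \<in> J0 - I" "insert x I \<in> Ind" using aug[OF less.prems(1) J0(2)] by blast
    have c: "card (insert x I) = Suc (card I)" using x ind_fin[OF less.prems(1)] by simp
    have m: "rk Ind T - card (insert x I) < rk Ind T - card I" using c lt by simp
    have s: "insert x I \<subseteq> T" using x J0 less.prems by blast
    obtain J where J: "insert x I \<subseteq> J" "J \<subseteq> T" "J \<in> Ind" "card J = rk Ind T"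
      using less.hyps[OF m x(2) s] by blast
    hence "I \<subseteq> J \<and> J \<subseteq> T \<and> J \<in> Ind \<and> card J = rk Ind T" by blast
    thus ?thesis by blast
  qed
qed

lemma cl_sub: "cl E Ind S \<subseteq> E" by (auto simp: cl_def)
lemma cl_incl: "S \<subseteq> E \<Longrightarrow> S \<subseteq> cl E Ind S" by (auto simp: cl_def insert_absorb)

lemma cl_mono: assumes "S \<subseteq> T" shows "cl E Ind S \<subseteq> cl E Ind T"
proof
  fix x assume xS: "x \<in> cl E Ind S"
  hence xE: "x \<in> E" and eqS: "rk Ind (insert x S) = rk Ind S" by (auto simp: cl_def)
  show "x \<in> cl E Ind T"
  proof (cases "x \<in> T")
    case True thus ?thesis using xE by (simp add: cl_def insert_absorb)
  next
    case xT: False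
    have ge: "rk Ind T \<le> rk Ind (insert x T)" by (rule rk_mono) auto
    have "\<not> rk Ind T < rk Ind (insert x T)"
    proof
      assume lt: "rk Ind T < rk Ind (insert x T)"
      obtain I where I: "I \<subseteq> S" "I \<in> Ind" "card I = rk Ind S" using rk_obtain by blast
      obtain J where J: "I \<subseteq> J" "J \<subseteq> T" "J \<in> Ind" "card J = rk Ind T"
        using extend[of I T] I assms by auto
      obtain K where K: "K \<subseteq> insert x T" "K \<in> Ind" "card K = rk Ind (insert x T)" using rk_obtain by blast
      obtain y where y: "y \<in> K - J" "insert y J \<in> Ind" using aug[OF J(3) K(2)] lt J K by auto
      have cJ: "card (insert y J) = Suc (card J)" using y ind_fin[OF J(3)] by simp
      show False
      proof (cases "y \<in> T")
        case True
        then have "card (insert y J) \<le> rk Ind T" using rk_ge[OF y(2)] J by auto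
        thus False using cJ J by simp
      next
        case False
        hence yx: "y = x" using y K by auto
        have "insert x I \<subseteq> insert y J" using J yx by blast
        hence "insert x I \<in> Ind" using ind_down[OF y(2)] by blast
        moreover have "insert x I \<subseteq> insert x S" using I by auto
        ultimately have "card (insert x I) \<le> rk Ind (insert x S)" by (rule rk_ge)
        moreover have "x \<notin> I" using yx y J by auto
        ultimately show False using I eqS ind_fin[OF I(2)] by simp
      qed
    qed
    thus ?thesis using ge xE by (simp add: cl_def)
  qed
qed

lemma rk_cl: assumes "S \<subseteq> E" shows "rk Ind (cl E Ind S) = rk Ind S"
proof -
  have ge: "rk Ind S \<le> rk Ind (cl E Ind S)" using rk_mono cl_incl assms by blast
  have "\<not> rk Ind S < rk Ind (cl E Ind S)"
  proof
    assume lt: "rk Ind S < rk Ind (cl E Ind S)"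
    obtain I where I: "I \<subseteq> S" "I \<in> Ind" "card I = rk Ind S" using rk_obtain by blast
    obtain K where K: "K \<subseteq> cl E Ind S" "K \<in> Ind" "card K = rk Ind (cl E Ind S)" using rk_obtain by blast
    obtain y where y: "y \<in> K - I" "insert y I \<in> Ind" using aug[OF I(2) K(2)] lt I K by auto
    have "y \<in> cl E Ind S" using y K by auto
    hence eq: "rk Ind (insert y S) = rk Ind S" by (simp add: cl_def)
    have "card (insert y I) \<le> rk Ind (insert y S)" using rk_ge[OF y(2)] I by auto
    thus False using eq I y ind_fin[OF I(2)] by simp
  qed
  thus ?thesis using ge by simp
qed

lemma cl_idem: assumes "S \<subseteq> E" shows "cl E Ind (cl E Ind S) = cl E Ind S"
proof
  show "cl E Ind S \<subseteq> cl E Ind (cl E Ind S)" using cl_incl cl_sub by blast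
  show "cl E Ind (cl E Ind S) \<subseteq> cl E Ind S"
  proof
    fix x assume x: "x \<in> cl E Ind (cl E Ind S)"
    hence xE: "x \<in> E" and eq: "rk Ind (insert x (cl E Ind S)) = rk Ind (cl E Ind S)" by (auto simp: cl_def)
    have "rk Ind (insert x S) \<le> rk Ind (insert x (cl E Ind S))"
      using rk_mono cl_incl[OF assms] by (meson insert_mono)
    moreover have "rk Ind S \<le> rk Ind (insert x S)" by (rule rk_mono) auto
    ultimately show "x \<in> cl E Ind S" using eq rk_cl[OF assms] xE by (simp add: cl_def)
  qed
qed

lemma flat_cl: "S \<subseteq> E \<Longrightarrow> flat E Ind (cl E Ind S)"
  using cl_sub cl_idem by (simp add: flat_def)

lemma flat_sub: "flat E Ind F \<Longrightarrow> F \<subseteq> E" by (simp add: flat_def)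
lemma flat_eq: "flat E Ind F \<Longrightarrow> cl E Ind F = F" by (simp add: flat_def)

lemma flat_int: assumes "flat E Ind F" "flat E Ind G" shows "flat E Ind (F \<inter> G)"
proof -
  have a: "cl E Ind (F \<inter> G) \<subseteq> cl E Ind F" by (rule cl_mono) blast
  have b: "cl E Ind (F \<inter> G) \<subseteq> cl E Ind G" by (rule cl_mono) blast
  have c: "F \<inter> G \<subseteq> E" using assms(1) by (auto simp: flat_def)
  have "cl E Ind (F \<inter> G) \<subseteq> F \<inter> G" using a b assms flat_eq by blast
  moreover have "F \<inter> G \<subseteq> cl E Ind (F \<inter> G)" using cl_incl[OF c] .
  ultimately show ?thesis using c unfolding flat_def by blast
qed

lemma cl_flat_le: "flat E Ind F \<Longrightarrow> S \<subseteq> F \<Longrightarrow> cl E Ind S \<subseteq> F"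
  using cl_mono flat_eq by blast

lemma single_ind: "x \<in> E \<Longrightarrow> {x} \<in> Ind" using simp unfolding simple_def by (metis insert_absorb2)

lemma cl_empty: "cl E Ind {} = {}"
proof -
  have r0: "rk Ind {} = 0" using rk_le_card[of "{}"] by simp
  have "x \<notin> cl E Ind {}" for x
  proof
    assume x: "x \<in> cl E Ind {}"
    hence "x \<in> E" "rk Ind {x} = rk Ind {}" by (auto simp: cl_def)
    moreover have "x \<in> E \<Longrightarrow> 1 \<le> rk Ind {x}" using rk_ge[of "{x}" "{x}"] single_ind by simp
    ultimately show False using r0 by simp
  qed
  thus ?thesis by blast
qed

lemma cl_single: assumes "a \<in> E" shows "cl E Ind {a} = {a}"
proof -
  have r1: "rk Ind {a} \<le> 1" using rk_le_card[of "{a}"] by simp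
  have "x \<notin> cl E Ind {a}" if "x \<noteq> a" for x
  proof
    assume x: "x \<in> cl E Ind {a}"
    hence xE: "x \<in> E" and eq: "rk Ind {x, a} = rk Ind {a}" by (auto simp: cl_def)
    have "{x,a} \<in> Ind" using simp assms xE by (simp add: simple_def)
    hence "card {x,a} \<le> rk Ind {x, a}" by (rule rk_ge) simp
    thus False using that eq r1 by simp
  qed
  moreover have "a \<in> cl E Ind {a}" using cl_incl assms by blast
  ultimately show ?thesis by blast
qed

lemma flat_empty: "flat E Ind {}" using cl_empty by (simp add: flat_def)
lemma flat_single: "a \<in> E \<Longrightarrow> flat E Ind {a}" using cl_single by (simp add: flat_def)


lemma interval_eq: "interval E Ind G = {X. flat E Ind X \<and> X \<subseteq> G}"
  by (auto simp: interval_def flats_def cl_empty)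

lemma D_imp_iso: assumes D: "Dsum E Ind A F" shows "isoP E Ind A F"
proof -
  have Af: "\<And>G. G \<in> A \<Longrightarrow> flat E Ind G" using D by (auto simp: Dsum_def flats_def)
  have dis: "\<And>G H. G \<in> A \<Longrightarrow> H \<in> A \<Longrightarrow> G \<noteq> H \<Longrightarrow> G \<inter> H = {}" using D by (auto simp: Dsum_def)
  have U: "\<Union>A = F" using D by (simp add: Dsum_def)
  have C: "\<And>X. X \<subseteq> F \<Longrightarrow> cl E Ind X = (\<Union>G\<in>A. cl E Ind (X \<inter> G))" using D by (simp add: Dsum_def)
  have FE: "F \<subseteq> E" using U Af flat_sub by blast
  define P where "P = (\<Pi>\<^sub>E G \<in> A. interval E Ind G)"
  have xs: "x G \<subseteq> G" "flat E Ind (x G)" if "x \<in> P" "G \<in> A" for x G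
    using that by (auto simp: P_def interval_eq)
  have J: "join_fam E Ind A x = (\<Union>G\<in>A. x G)" if x: "x \<in> P" for x
  proof -
    let ?U = "\<Union>G\<in>A. x G"
    have "?U \<subseteq> F" using xs[OF x] U by blast
    hence "cl E Ind ?U = (\<Union>H\<in>A. cl E Ind (?U \<inter> H))" by (rule C)
    also have "\<dots> = (\<Union>H\<in>A. cl E Ind (x H))"
    proof (rule SUP_cong)
      fix H assume H: "H \<in> A"
      have "?U \<inter> H = x H"
      proof
        show "?U \<inter> H \<subseteq> x H"
        proof
          fix a assume "a \<in> ?U \<inter> H"
          then obtain G where G: "G \<in> A" "a \<in> x G" "a \<in> H" by blast
          have "G = H" using dis[OF G(1) H] xs[OF x G(1)] G by blast
          thus "a \<in> x H" using G by simp
        qed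
        show "x H \<subseteq> ?U \<inter> H" using H xs[OF x H] by blast
      qed
      thus "cl E Ind (?U \<inter> H) = cl E Ind (x H)" by simp
    qed simp
    also have "\<dots> = ?U" using xs[OF x] flat_eq by simp
    finally show ?thesis by (simp add: join_fam_def)
  qed
  have JI: "join_fam E Ind A x \<inter> H = x H" if x: "x \<in> P" and H: "H \<in> A" for x H
    unfolding J[OF x] using xs[OF x] dis H by blast
  have inj: "inj_on (join_fam E Ind A) P"
  proof (rule inj_onI)
    fix x y assume x: "x \<in> P" and y: "y \<in> P" and eq: "join_fam E Ind A x = join_fam E Ind A y"
    show "x = y"
    proof (rule PiE_ext[of x A "\<lambda>G. interval E Ind G" y])
      show "x \<in> (\<Pi>\<^sub>E G \<in> A. interval E Ind G)" "y \<in> (\<Pi>\<^sub>E G \<in> A. interval E Ind G)" using x y by (auto simp: P_def)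
      fix i assume "i \<in> A" thus "x i = y i" using JI[OF x] JI[OF y] eq by metis
    qed
  qed
  have img: "join_fam E Ind A ` P = interval E Ind F"
  proof
    show "join_fam E Ind A ` P \<subseteq> interval E Ind F"
    proof
      fix Y assume "Y \<in> join_fam E Ind A ` P"
      then obtain x where x: "x \<in> P" and Y: "Y = join_fam E Ind A x" by blast
      have "(\<Union>G\<in>A. x G) \<subseteq> E" using xs[OF x] Af flat_sub by blast
      hence "flat E Ind Y" unfolding Y join_fam_def by (rule flat_cl)
      moreover have "Y \<subseteq> F" using J[OF x] Y xs[OF x] U by blast
      ultimately show "Y \<in> interval E Ind F" by (simp add: interval_eq)
    qed
    show "interval E Ind F \<subseteq> join_fam E Ind A ` P"
    proof
      fix Y assume "Y \<in> interval E Ind F"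
      hence Y: "flat E Ind Y" "Y \<subseteq> F" by (auto simp: interval_eq)
      define w where "w = restrict (\<lambda>G. Y \<inter> G) A"
      have w: "w \<in> P" unfolding w_def P_def restrict_PiE_iff interval_eq
        using flat_int Y Af by blast
      have "join_fam E Ind A w = (\<Union>G\<in>A. Y \<inter> G)" using J[OF w] by (simp add: w_def)
      also have "\<dots> = Y" using Y U by blast
      finally show "Y \<in> join_fam E Ind A ` P" using w by (metis image_eqI)
    qed
  qed
  have ord: "(\<forall>G \<in> A. x G \<subseteq> y G) \<longleftrightarrow> join_fam E Ind A x \<subseteq> join_fam E Ind A y"
    if x: "x \<in> P" and y: "y \<in> P" for x y
  proof
    assume "\<forall>G \<in> A. x G \<subseteq> y G" thus "join_fam E Ind A x \<subseteq> join_fam E Ind A y"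
      unfolding J[OF x] J[OF y] by blast
  next
    assume "join_fam E Ind A x \<subseteq> join_fam E Ind A y"
    thus "\<forall>G \<in> A. x G \<subseteq> y G" using JI[OF x] JI[OF y] by blast
  qed
  show ?thesis unfolding isoP_def using inj img ord by (simp add: bij_betw_def P_def)
qed


lemma iso_imp_D: assumes iso: "isoP E Ind A F" and Af: "A \<subseteq> flats E Ind" and F: "flat E Ind F"
  shows "Dsum E Ind A F"
proof -
  define P where "P = (\<Pi>\<^sub>E G \<in> A. interval E Ind G)"
  define J where "J = join_fam E Ind A"
  have inj: "inj_on J P" and img: "J ` P = interval E Ind F"
    using iso by (auto simp: isoP_def bij_betw_def P_def J_def)
  have flatA: "\<And>G. G \<in> A \<Longrightarrow> flat E Ind G" using Af by (auto simp: flats_def)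
  have FE: "F \<subseteq> E" using F flat_sub by blast
  have xs: "x G \<subseteq> G" "flat E Ind (x G)" if "x \<in> P" "G \<in> A" for x G
    using that by (auto simp: P_def interval_eq)
  define sg where "sg = (\<lambda>G (X::'a set). restrict (\<lambda>H. if H = G then X else {}) A)"
  have sgP: "sg G X \<in> P" if "flat E Ind X" "X \<subseteq> G" for G X
    unfolding sg_def P_def restrict_PiE_iff interval_eq using that flat_empty by auto
  have sgJ: "J (sg G X) = cl E Ind X" if "G \<in> A" for G X
  proof -
    have "(\<Union>H\<in>A. (if H = G then X else {})) = X" using that by auto
    thus ?thesis unfolding sg_def J_def join_restrict by simp
  qed
  have inF: "Y \<in> interval E Ind F" if "Y \<in> J ` P" for Y using img that by blast
  have s1: "G \<subseteq> F" if G: "G \<in> A" for G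
  proof -
    have "J (sg G G) \<in> interval E Ind F" using inF sgP[OF flatA[OF G]] by blast
    moreover have "J (sg G G) = G" using sgJ[OF G] flat_eq[OF flatA[OF G]] by simp
    ultimately show ?thesis by (simp add: interval_eq)
  qed
  have dis: "G \<inter> H = {}" if G: "G \<in> A" and H: "H \<in> A" and ne: "G \<noteq> H" for G H
  proof (rule ccontr)
    assume "G \<inter> H \<noteq> {}"
    then obtain a where a: "a \<in> G" "a \<in> H" by blast
    have aE: "a \<in> E" using a flatA[OF G] flat_sub by blast
    have p1: "sg G {a} \<in> P" using sgP flat_single[OF aE] a by blast
    have p2: "sg H {a} \<in> P" using sgP flat_single[OF aE] a by blast
    have "J (sg G {a}) = J (sg H {a})" using sgJ G H by simp
    hence "sg G {a} = sg H {a}" using inj p1 p2 by (meson inj_onD)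
    hence "sg G {a} G = sg H {a} G" by simp
    thus False using G ne by (simp add: sg_def)
  qed
  have xJ: "x G \<subseteq> J x" if x: "x \<in> P" and G: "G \<in> A" for x G
  proof -
    have "(\<Union>G\<in>A. x G) \<subseteq> E" using xs[OF x] flatA flat_sub by blast
    hence "(\<Union>G\<in>A. x G) \<subseteq> J x" unfolding J_def join_fam_def by (rule cl_incl)
    thus ?thesis using G by blast
  qed
  have U: "\<Union>A = F"
  proof
    show "\<Union>A \<subseteq> F" using s1 by blast
    show "F \<subseteq> \<Union>A"
    proof
      fix a assume aF: "a \<in> F"
      have aE: "a \<in> E" using aF FE by blast
      have "{a} \<in> interval E Ind F" using flat_single[OF aE] aF by (simp add: interval_eq)
      then obtain x where x: "x \<in> P" and Jx: "J x = {a}" using img by (metis imageE)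
      show "a \<in> \<Union>A"
      proof (rule ccontr)
        assume na: "a \<notin> \<Union>A"
        have "x G \<subseteq> {a} - {a}" if "G \<in> A" for G using xJ[OF x that] Jx xs[OF x that] na that by blast
        hence "(\<Union>G\<in>A. x G) = {}" by blast
        hence "J x = {}" by (simp add: J_def join_fam_def cl_empty)
        thus False using Jx by simp
      qed
    qed
  qed
  have C: "cl E Ind X = (\<Union>G\<in>A. cl E Ind (X \<inter> G))" if X: "X \<subseteq> F" for X
  proof -
    define Y where "Y = cl E Ind X"
    have XE: "X \<subseteq> E" using X FE by blast
    have fY: "flat E Ind Y" unfolding Y_def by (rule flat_cl[OF XE])
    have YF: "Y \<subseteq> F" unfolding Y_def using cl_flat_le[OF F X] .
    define z where "z = restrict (\<lambda>G. cl E Ind (X \<inter> G)) A"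
    define w where "w = restrict (\<lambda>G. Y \<inter> G) A"
    have zP: "z \<in> P" unfolding z_def P_def restrict_PiE_iff interval_eq
    proof
      fix G assume G: "G \<in> A"
      have "X \<inter> G \<subseteq> E" using XE by blast
      thus "cl E Ind (X \<inter> G) \<in> {Xa. flat E Ind Xa \<and> Xa \<subseteq> G}"
        using flat_cl cl_flat_le[OF flatA[OF G]] by blast
    qed
    have wP: "w \<in> P" unfolding w_def P_def restrict_PiE_iff interval_eq
      using flat_int fY flatA by blast
    have Jz: "J z = Y"
    proof -
      have a: "(\<Union>G\<in>A. cl E Ind (X \<inter> G)) \<subseteq> Y" unfolding Y_def using cl_mono by blast
      have "X \<subseteq> (\<Union>G\<in>A. cl E Ind (X \<inter> G))"
      proof
        fix a assume aX: "a \<in> X"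
        then obtain G where G: "G \<in> A" "a \<in> G" using X U by blast
        have "X \<inter> G \<subseteq> cl E Ind (X \<inter> G)" using cl_incl XE by blast
        thus "a \<in> (\<Union>G\<in>A. cl E Ind (X \<inter> G))" using G aX by blast
      qed
      hence b: "Y \<subseteq> cl E Ind (\<Union>G\<in>A. cl E Ind (X \<inter> G))" unfolding Y_def by (rule cl_mono)
      have c: "cl E Ind (\<Union>G\<in>A. cl E Ind (X \<inter> G)) \<subseteq> Y" using cl_flat_le[OF fY a] .
      show ?thesis unfolding z_def J_def join_restrict using b c by blast
    qed
    have Jw: "J w = Y"
    proof -
      have "(\<Union>G\<in>A. Y \<inter> G) = Y" using YF U by blast
      thus ?thesis unfolding w_def J_def join_restrict using flat_eq[OF fY] by simp
    qed
    have "z = w" using inj zP wP Jz Jw by (metis inj_onD)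
    hence eq: "cl E Ind (X \<inter> G) = Y \<inter> G" if "G \<in> A" for G
    proof -
      have "z G = w G" using \<open>z = w\<close> by simp
      thus ?thesis using that by (simp add: z_def w_def)
    qed
    have "Y = (\<Union>G\<in>A. Y \<inter> G)" using YF U by blast
    also have "\<dots> = (\<Union>G\<in>A. cl E Ind (X \<inter> G))" using eq by simp
    finally show ?thesis by (simp add: Y_def)
  qed
  show ?thesis unfolding Dsum_def using Af dis U C by blast
qed

end

lemma del_matroid: assumes m: "matroid E Ind" shows "matroid (E - {e}) (del_ind Ind e)"
proof -
  have aug: "\<And>I J. I \<in> Ind \<Longrightarrow> J \<in> Ind \<Longrightarrow> card I < card J \<Longrightarrow> \<exists>x\<in>J - I. insert x I \<in> Ind"
    using m by (simp add: matroid_def)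
  have a2: "\<forall>I J. I \<in> del_ind Ind e \<longrightarrow> J \<in> del_ind Ind e \<longrightarrow> card I < card J \<longrightarrow>
           (\<exists>x \<in> J - I. insert x I \<in> del_ind Ind e)"
  proof (intro allI impI)
    fix I J assume h: "I \<in> del_ind Ind e" "J \<in> del_ind Ind e" "card I < card J"
    have IJ: "I \<in> Ind" "J \<in> Ind" using h by (auto simp: del_ind_def)
    obtain x where "x \<in> J - I" "insert x I \<in> Ind" using aug[OF IJ h(3)] by blast
    thus "\<exists>x \<in> J - I. insert x I \<in> del_ind Ind e" using h by (auto simp: del_ind_def)
  qed
  have f: "finite (E - {e})" using m by (simp add: matroid_def)
  have p: "del_ind Ind e \<subseteq> Pow (E - {e})" using m by (auto simp: matroid_def del_ind_def)
  have em: "{} \<in> del_ind Ind e" using m by (simp add: matroid_def del_ind_def)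
  have dn0: "\<And>I J. J \<in> Ind \<Longrightarrow> I \<subseteq> J \<Longrightarrow> I \<in> Ind" using m by (simp add: matroid_def)
  have dn: "\<forall>I J. J \<in> del_ind Ind e \<longrightarrow> I \<subseteq> J \<longrightarrow> I \<in> del_ind Ind e"
    using dn0 unfolding del_ind_def by blast
  show ?thesis unfolding matroid_def using f p em dn a2 by (intro conjI)
qed

lemma del_simple: "simple E Ind \<Longrightarrow> simple (E - {e}) (del_ind Ind e)"
  by (auto simp: simple_def del_ind_def)

lemma rk_del: "rk (del_ind Ind e) S = rk Ind (S - {e})"
proof -
  have "{I. I \<subseteq> S \<and> I \<in> del_ind Ind e} = {I. I \<subseteq> S - {e} \<and> I \<in> Ind}"
    by (auto simp: del_ind_def)
  thus ?thesis by (simp add: rk_def)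
qed

lemma cl_del: "cl (E - {e}) (del_ind Ind e) S = cl E Ind (S - {e}) - {e}"
proof (rule set_eqI)
  fix x
  show "x \<in> cl (E - {e}) (del_ind Ind e) S \<longleftrightarrow> x \<in> cl E Ind (S - {e}) - {e}"
  proof (cases "x = e")
    case True thus ?thesis by (simp add: cl_def)
  next
    case False
    hence "insert x S - {e} = insert x (S - {e})" by blast
    thus ?thesis using False by (simp add: cl_def rk_del)
  qed
qed

theorem lemma2p24:
  fixes E :: "'a set" and Ind :: "'a set set" and \<G> :: "'a set set" and e :: 'a
  assumes "matroid E Ind"
    and "simple E Ind"
    and "building_set E Ind \<G>"
    and "e \<in> E"
  shows "building_set (E - {e}) (del_ind Ind e)
           {S \<in> flats (E - {e}) (del_ind Ind e). cl E Ind S \<in> \<G>}"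
proof -
  interpret M: smat E Ind using assms by (simp add: smat_def)
  interpret N: smat "E - {e}" "del_ind Ind e" using del_matroid[OF assms(1)] del_simple[OF assms(2)] by (simp add: smat_def)
  define G' where "G' = {S \<in> flats (E - {e}) (del_ind Ind e). cl E Ind S \<in> \<G>}"
  have GM: "\<G> \<subseteq> flats E Ind - {{}}" and
    isoM: "\<And>F. F \<in> flats E Ind \<Longrightarrow> F \<noteq> {} \<Longrightarrow> isoP E Ind (maxG \<G> F) F"
    using assms(3) M.cl_empty unfolding bs_iff by auto
  have Gfin: "finite \<G>"
  proof -
    have "\<G> \<subseteq> Pow E" using GM M.flat_sub by (auto simp: flats_def)
    thus ?thesis using M.finE by (meson finite_Pow_iff finite_subset)
  qed
  have flatN: "flat (E - {e}) (del_ind Ind e) S \<longleftrightarrow> S \<subseteq> E - {e} \<and> cl E Ind S - {e} = S" for S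
  proof -
    have "S \<subseteq> E - {e} \<Longrightarrow> S - {e} = S" by blast
    thus ?thesis unfolding flat_def cl_del by metis
  qed
  have part1: "G' \<subseteq> flats (E - {e}) (del_ind Ind e) - {cl (E - {e}) (del_ind Ind e) {}}"
  proof
    fix S assume S: "S \<in> G'"
    have "S \<noteq> {}" using S GM M.cl_empty by (auto simp: G'_def)
    thus "S \<in> flats (E - {e}) (del_ind Ind e) - {cl (E - {e}) (del_ind Ind e) {}}"
      using S N.cl_empty by (auto simp: G'_def)
  qed
  have part2: "isoP (E - {e}) (del_ind Ind e) (maxG G' F') F'"
    if F'fl: "F' \<in> flats (E - {e}) (del_ind Ind e)" and F'ne: "F' \<noteq> cl (E - {e}) (del_ind Ind e) {}" for F'
  proof -
    have "flat (E - {e}) (del_ind Ind e) F'" using F'fl by (simp add: flats_def)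
    hence F'E: "F' \<subseteq> E - {e}" and clF': "cl E Ind F' - {e} = F'" unfolding flatN by blast+
    have F'ne2: "F' \<noteq> {}" using F'ne N.cl_empty by simp
    define F where "F = cl E Ind F'"
    have fF: "flat E Ind F" unfolding F_def using M.flat_cl F'E by blast
    have F'F: "F' \<subseteq> F" unfolding F_def using M.cl_incl F'E by blast
    have FF': "F - {e} = F'" using clF' F_def by simp
    have Fne: "F \<noteq> {}" using F'F F'ne2 by blast
    define A where "A = maxG \<G> F"
    have AG: "A \<subseteq> \<G>" by (auto simp: A_def maxG_def)
    have Af: "A \<subseteq> flats E Ind" using AG GM by blast
    have Ffl: "F \<in> flats E Ind" using fF by (simp add: flats_def)
    have D: "Dsum E Ind A F" unfolding A_def
      using M.iso_imp_D[OF isoM[OF Ffl Fne]] Af fF A_def by blast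
    have dis: "\<And>G H. G \<in> A \<Longrightarrow> H \<in> A \<Longrightarrow> G \<noteq> H \<Longrightarrow> G \<inter> H = {}" using D by (auto simp: Dsum_def)
    have U: "\<Union>A = F" using D by (simp add: Dsum_def)
    have C: "\<And>X. X \<subseteq> F \<Longrightarrow> cl E Ind X = (\<Union>G\<in>A. cl E Ind (X \<inter> G))" using D by (simp add: Dsum_def)
    have flatA: "\<And>G. G \<in> A \<Longrightarrow> flat E Ind G" using Af by (auto simp: flats_def)
    have GF: "\<And>G. G \<in> A \<Longrightarrow> G \<subseteq> F" using U by blast
    have key: "cl E Ind (G - {e}) = G" if G: "G \<in> A" for G
    proof
      show "cl E Ind (G - {e}) \<subseteq> G" using M.cl_flat_le[OF flatA[OF G]] by blast
      have GE: "G \<subseteq> E" using flatA[OF G] M.flat_sub by blast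
      have s: "G - {e} \<subseteq> cl E Ind (G - {e})" using M.cl_incl GE by blast
      show "G \<subseteq> cl E Ind (G - {e})"
      proof (cases "e \<in> G")
        case False thus ?thesis using s by blast
      next
        case True
        have "e \<in> F" using True GF[OF G] by blast
        hence "e \<in> (\<Union>H\<in>A. cl E Ind (F' \<inter> H))" using C[OF F'F] F_def by simp
        then obtain H where H: "H \<in> A" "e \<in> cl E Ind (F' \<inter> H)" by blast
        have "cl E Ind (F' \<inter> H) \<subseteq> H" using M.cl_flat_le[OF flatA[OF H(1)]] by blast
        hence "e \<in> H" using H by blast
        hence HG: "H = G" using dis[OF H(1) G] True by blast
        have "F' \<inter> G = G - {e}" using FF' GF[OF G] by blast
        thus ?thesis using H HG s by auto
      qed
    qed
    have a2: "G - {e} \<in> G'" if G: "G \<in> A" for G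
    proof -
      have GE: "G \<subseteq> E" using flatA[OF G] M.flat_sub by blast
      have "G - {e} - {e} = G - {e}" by blast
      hence "flat (E - {e}) (del_ind Ind e) (G - {e})" using flatN key[OF G] GE by auto
      thus ?thesis using key[OF G] AG G by (auto simp: G'_def flats_def)
    qed
    have b: "\<exists>H\<in>A. S \<subseteq> H - {e}" if S: "S \<in> G'" "S \<subseteq> F'" for S
    proof -
      have "flat (E - {e}) (del_ind Ind e) S" using S by (simp add: G'_def flats_def)
      hence SE: "S \<subseteq> E - {e}" unfolding flatN by blast
      have c1: "cl E Ind S \<in> \<G>" using S by (simp add: G'_def)
      have c2: "cl E Ind S \<subseteq> F" unfolding F_def using M.cl_mono S by blast
      have "finite {H \<in> \<G>. H \<subseteq> F}" using Gfin by simp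
      then obtain m where m: "m \<in> {H \<in> \<G>. H \<subseteq> F}" "cl E Ind S \<subseteq> m"
        "\<forall>b \<in> {H \<in> \<G>. H \<subseteq> F}. m \<subseteq> b \<longrightarrow> m = b"
        using finite_has_maximal2[of "{H \<in> \<G>. H \<subseteq> F}" "cl E Ind S"] c1 c2 by blast
      have mA: "m \<in> A" using m unfolding A_def maxG_def by blast
      have "S \<subseteq> cl E Ind S" using M.cl_incl SE by blast
      hence "S \<subseteq> m - {e}" using m SE by blast
      thus ?thesis using mA by blast
    qed
    have ne: "G - {e} \<noteq> {}" if G: "G \<in> A" for G
    proof
      assume "G - {e} = {}"
      hence "G = cl E Ind {}" using key[OF G] by metis
      hence "G = {}" using M.cl_empty by simp
      thus False using G AG GM by blast
    qed
    have maxeq: "maxG G' F' = (\<lambda>G. G - {e}) ` A"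
    proof
      show "(\<lambda>G. G - {e}) ` A \<subseteq> maxG G' F'"
      proof
        fix T assume "T \<in> (\<lambda>G. G - {e}) ` A"
        then obtain G where G: "G \<in> A" and T: "T = G - {e}" by blast
        have "T \<in> G'" using a2 G T by simp
        moreover have "T \<subseteq> F'" using GF[OF G] FF' T by blast
        moreover have "\<not> (\<exists>S \<in> G'. S \<subseteq> F' \<and> T \<subset> S)"
        proof
          assume "\<exists>S \<in> G'. S \<subseteq> F' \<and> T \<subset> S"
          then obtain S where S: "S \<in> G'" "S \<subseteq> F'" "T \<subset> S" by blast
          obtain H where H: "H \<in> A" "S \<subseteq> H - {e}" using b[OF S(1,2)] by blast
          have "G \<inter> H \<noteq> {}" using ne[OF G] T S H by blast
          hence "G = H" using dis G H(1) by blast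
          thus False using S H T by blast
        qed
        ultimately show "T \<in> maxG G' F'" by (simp add: maxG_def)
      qed
      show "maxG G' F' \<subseteq> (\<lambda>G. G - {e}) ` A"
      proof
        fix S assume "S \<in> maxG G' F'"
        hence S: "S \<in> G'" "S \<subseteq> F'" and mx: "\<not> (\<exists>H \<in> G'. H \<subseteq> F' \<and> S \<subset> H)" by (auto simp: maxG_def)
        obtain H where H: "H \<in> A" "S \<subseteq> H - {e}" using b[OF S] by blast
        have "H - {e} \<in> G'" "H - {e} \<subseteq> F'" using a2[OF H(1)] GF[OF H(1)] FF' by auto
        hence "S = H - {e}" using mx H by blast
        thus "S \<in> (\<lambda>G. G - {e}) ` A" using H by blast
      qed
    qed
    have DN: "Dsum (E - {e}) (del_ind Ind e) ((\<lambda>G. G - {e}) ` A) F'"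
      unfolding Dsum_def
    proof (intro conjI allI impI ballI)
      show "(\<lambda>G. G - {e}) ` A \<subseteq> flats (E - {e}) (del_ind Ind e)" using a2 by (auto simp: G'_def)
      fix G H assume g: "G \<in> (\<lambda>G. G - {e}) ` A" and h: "H \<in> (\<lambda>G. G - {e}) ` A" and gh: "G \<noteq> H"
      obtain G0 where G0: "G0 \<in> A" "G = G0 - {e}" using g by blast
      obtain H0 where H0: "H0 \<in> A" "H = H0 - {e}" using h by blast
      have "G0 \<noteq> H0" using G0 H0 gh by blast
      hence "G0 \<inter> H0 = {}" using dis G0 H0 by blast
      thus "G \<inter> H = {}" using G0 H0 by blast
    next
      show "\<Union>((\<lambda>G. G - {e}) ` A) = F'" using U FF' by blast
    next
      fix X assume X: "X \<subseteq> F'"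
      have XF: "X \<subseteq> F" using X F'F by blast
      have Xe: "X - {e} = X" using X F'E by blast
      have "cl (E - {e}) (del_ind Ind e) X = cl E Ind X - {e}" using Xe by (simp add: cl_del)
      also have "\<dots> = (\<Union>G\<in>A. cl E Ind (X \<inter> G)) - {e}" using C[OF XF] by simp
      also have "\<dots> = (\<Union>G\<in>A. cl (E - {e}) (del_ind Ind e) (X \<inter> (G - {e})))"
      proof -
        have eq: "X \<inter> (G - {e}) - {e} = X \<inter> G" for G using Xe by blast
        have "(\<Union>G\<in>A. cl E Ind (X \<inter> G)) - {e} = (\<Union>G\<in>A. cl E Ind (X \<inter> G) - {e})" by blast
        also have "\<dots> = (\<Union>G\<in>A. cl (E - {e}) (del_ind Ind e) (X \<inter> (G - {e})))"
          by (rule SUP_cong) (simp_all only: cl_del eq)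
        finally show ?thesis .
      qed
      also have "\<dots> = (\<Union>G'\<in>(\<lambda>G. G - {e}) ` A. cl (E - {e}) (del_ind Ind e) (X \<inter> G'))" by simp
      finally show "cl (E - {e}) (del_ind Ind e) X = (\<Union>G'\<in>(\<lambda>G. G - {e}) ` A. cl (E - {e}) (del_ind Ind e) (X \<inter> G'))" .
    qed
    show ?thesis unfolding maxeq by (rule N.D_imp_iso[OF DN])
  qed
  show ?thesis unfolding G'_def[symmetric] bs_iff using part1 part2 by blast
qed

end
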